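(* Let $\mathcal f:S\to T$ be a simulation with cut-off $\Delta>\min(H_T)$, physical spin assignment $P$ and decoding $\mathrm{dec}$, and let $\vec s$ be a ground state of $S$, i.e. $\vec s\in H_S^{-1}(\{\min H_S\})$. Then $\vec t=\mathrm{dec}\circ\vec s\circ P$ is a ground state of $T$.
   Context: A spin system $S=(q_S,V_S,E_S,J_S)$: integer $q_S\ge2$, finite set $V_S$, hyperedges $E_S\subseteq\mathcal P(V_S)$ covering $V_S$, $J_S(e):[q_S]^e\to\mathbb R_{\ge0}$. $\mathcal C_S=[q_S]^{V_S}$, $H_S(\vec s)=\sum_eJ_S(e)(\vec s|_e)$. A simulation $\mathcal f:S\to T$ consists of a cut-off $\Delta>0$, shift $\Gamma\in\mathbb R$, degeneracy $d\in\mathbb N$, $P:V_T\to V_S^k$ (components $P^{(i)}$), $\mathrm{dec}:[q_S]^k\to[q_T]$, and $\mathrm{enc}=(\mathrm{enc}_i:[q_T]\to[q_S]^k)_{i=1,\dots,m}$, satisfying: (1) $P^{(i)}(v)=P^{(j)}(w)\Rightarrow i=j,\ v=w$; (2) $\mathrm{dec}\circ\mathrm{enc}_i=\mathrm{id}$; (3) $\mathrm{enc}_i(t)=\mathrm{enc}_j(t)$ for some $t$ implies $i=j$; (4) with $\mathrm{sim}_i(\vec t)=\{\vec s\in\mathcal C_S:\vec s\circ P=\mathrm{enc}_i\circ\vec t,\ H_S(\vec s)-\Gamma<\Delta\}$, $|\mathrm{sim}_i(\vec t)|=d$ whenever $H_T(\vec t)<\Delta$; (5) $H_S(\vec s)-\Gamma=H_T(\vec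 t)$ for $\vec s\in\bigcup_i\mathrm{sim}_i(\vec t)$, and $H_S(\vec s)-\Gamma\ge\Delta$ for every $\vec s$ in no $\mathrm{sim}_i(\vec t)$. Here $(\vec s\circ P)(v)=(\vec s(P^{(1)}(v)),\dots,\vec s(P^{(k)}(v)))$, $(\mathrm{enc}_i\circ\vec t)(v)=\mathrm{enc}_i(\vec t(v))$, and $\mathrm{dec}\circ\vec s\circ P\in\mathcal C_T$ is $v\mapsto\mathrm{dec}((\vec s\circ P)(v))$. *)

theory Defs
  imports Complex_Main "HOL-Library.FuncSet"
begin

text \<open>Spin system S = (q, V, E, J). The spin values are [q] = {1..q}.
  Configurations are extensional functions V \<rightarrow> [q] (PiE).
  Tuples in [q]^k are represented as lists of length k.\<close>

record 'v spin_system =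
  sq :: nat
  sV :: "'v set"
  sE :: "'v set set"
  sJ :: "'v set \<Rightarrow> ('v \<Rightarrow> nat) \<Rightarrow> real"

definition spins :: "nat \<Rightarrow> nat set" where
  "spins q = {1..q}"

definition configs :: "('v, 'z) spin_system_scheme \<Rightarrow> ('v \<Rightarrow> nat) set" where
  "configs S = PiE (sV S) (\<lambda>_. spins (sq S))"

definition spin_system :: "('v, 'z) spin_system_scheme \<Rightarrow> bool" where
  "spin_system S \<longleftrightarrow>
     sq S \<ge> 2 \<and> finite (sV S) \<and> sE S \<subseteq> Pow (sV S) \<and> \<Union>(sE S) = sV S \<and>
     (\<forall>e\<in>sE S. \<forall>\<sigma>\<in>PiE e (\<lambda>_. spins (sq S)). sJ S e \<sigma> \<ge> 0)"

definition ham :: "('v, 'z) spin_system_scheme \<Rightarrow> ('v \<Rightarrow> nat) \<Rightarrow> real" where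
  "ham S s = (\<Sum>e\<in>sE S. sJ S e (restrict s e))"

definition ground_state :: "('v, 'z) spin_system_scheme \<Rightarrow> ('v \<Rightarrow> nat) \<Rightarrow> bool" where
  "ground_state S s \<longleftrightarrow> s \<in> configs S \<and> ham S s = Min (ham S ` configs S)"

text \<open>sim_i(t): P :: 'w \<Rightarrow> 'v list (the k physical spins of each target spin),
  enc :: nat \<Rightarrow> nat \<Rightarrow> nat list (enc i, for i \<in> {1..m}).\<close>

definition sim_set ::
  "('v, 'z) spin_system_scheme \<Rightarrow> ('w, 'y) spin_system_scheme \<Rightarrow> real \<Rightarrow> real \<Rightarrow>
   ('w \<Rightarrow> 'v list) \<Rightarrow> (nat \<Rightarrow> nat \<Rightarrow> nat list) \<Rightarrow> nat \<Rightarrow> ('w \<Rightarrow> nat) \<Rightarrow> ('v \<Rightarrow> nat) set" where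
  "sim_set S T \<Delta> \<Gamma> P enc i t =
     {s \<in> configs S. (\<forall>v\<in>sV T. map s (P v) = enc i (t v)) \<and> ham S s - \<Gamma> < \<Delta>}"

definition is_simulation ::
  "('v, 'z) spin_system_scheme \<Rightarrow> ('w, 'y) spin_system_scheme \<Rightarrow> real \<Rightarrow> real \<Rightarrow> nat \<Rightarrow> nat \<Rightarrow>
   ('w \<Rightarrow> 'v list) \<Rightarrow> (nat list \<Rightarrow> nat) \<Rightarrow> nat \<Rightarrow> (nat \<Rightarrow> nat \<Rightarrow> nat list) \<Rightarrow> bool" where
  "is_simulation S T \<Delta> \<Gamma> d k P dec m enc \<longleftrightarrow>
     spin_system S \<and> spin_system T \<and> \<Delta> > 0 \<and> d \<ge> 1 \<and> m \<ge> 1 \<and>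
     \<comment> \<open>typing: P : V_T \<rightarrow> V_S^k, dec : [q_S]^k \<rightarrow> [q_T], enc_i : [q_T] \<rightarrow> [q_S]^k\<close>
     (\<forall>v\<in>sV T. length (P v) = k \<and> set (P v) \<subseteq> sV S) \<and>
     (\<forall>xs. length xs = k \<and> set xs \<subseteq> spins (sq S) \<longrightarrow> dec xs \<in> spins (sq T)) \<and>
     (\<forall>i\<in>{1..m}. \<forall>t\<in>spins (sq T). length (enc i t) = k \<and> set (enc i t) \<subseteq> spins (sq S)) \<and>
     \<comment> \<open>(1)\<close>
     (\<forall>v\<in>sV T. \<forall>w\<in>sV T. \<forall>i<k. \<forall>j<k. P v ! i = P w ! j \<longrightarrow> i = j \<and> v = w) \<and>
     \<comment> \<open>(2)\<close>
     (\<forall>i\<in>{1..m}. \<forall>t\<in>spins (sq T). dec (enc i t) = t) \<and>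
     \<comment> \<open>(3)\<close>
     (\<forall>i\<in>{1..m}. \<forall>j\<in>{1..m}. (\<exists>t\<in>spins (sq T). enc i t = enc j t) \<longrightarrow> i = j) \<and>
     \<comment> \<open>(4)\<close>
     (\<forall>i\<in>{1..m}. \<forall>t\<in>configs T. ham T t < \<Delta> \<longrightarrow>
         card (sim_set S T \<Delta> \<Gamma> P enc i t) = d) \<and>
     \<comment> \<open>(5)\<close>
     (\<forall>t\<in>configs T. \<forall>i\<in>{1..m}. \<forall>s\<in>sim_set S T \<Delta> \<Gamma> P enc i t. ham S s - \<Gamma> = ham T t) \<and>
     (\<forall>s\<in>configs S. (\<forall>t\<in>configs T. \<forall>i\<in>{1..m}. s \<notin> sim_set S T \<Delta> \<Gamma> P enc i t) \<longrightarrow>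
         ham S s - \<Gamma> \<ge> \<Delta>)"

end

theory Submission
  imports Defs
begin

lemma configs_finite_ne:
  assumes "spin_system S"
  shows "finite (configs S)" "configs S \<noteq> {}"
proof -
  have f: "finite (sV S)" and q: "sq S \<ge> 2" using assms by (auto simp: spin_system_def)
  show "finite (configs S)" unfolding configs_def spins_def using f by (intro finite_PiE) auto
  have "spins (sq S) \<noteq> {}" using q by (auto simp: spins_def)
  then show "configs S \<noteq> {}" unfolding configs_def by (simp add: PiE_eq_empty_iff)
qed

theorem mainTheorem12:
  fixes S :: "('v, 'z) spin_system_scheme" and T :: "('w, 'y) spin_system_scheme"
  assumes "is_simulation S T \<Delta> \<Gamma> d k P dec m enc"
    and "\<Delta> > Min (ham T ` configs T)"
    and "ground_state S s"
  shows "ground_state T (restrict (\<lambda>v. dec (map s (P v))) (sV T))"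
proof -
  note sim = assms(1)[unfolded is_simulation_def]
  have sS: "spin_system S" using sim by (elim conjE) assumption
  have sT: "spin_system T" using sim by (elim conjE) assumption
  have d1: "d \<ge> 1" using sim by (elim conjE) assumption
  have mge: "m \<ge> 1" using sim by (elim conjE) assumption
  have m1: "(1::nat) \<in> {1..m}" using mge by simp
  have dec: "\<forall>i\<in>{1..m}. \<forall>t\<in>spins (sq T). dec (enc i t) = t" using sim by (elim conjE) assumption
  have c4: "\<forall>i\<in>{1..m}. \<forall>t\<in>configs T. ham T t < \<Delta> \<longrightarrow>
         card (sim_set S T \<Delta> \<Gamma> P enc i t) = d" using sim by (elim conjE) assumption
  have c5: "\<forall>t\<in>configs T. \<forall>i\<in>{1..m}. \<forall>s\<in>sim_set S T \<Delta> \<Gamma> P enc i t. ham S s - \<Gamma> = ham T t" using sim by (elim conjE) assumption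
  have c6: "\<forall>s\<in>configs S. (\<forall>t\<in>configs T. \<forall>i\<in>{1..m}. s \<notin> sim_set S T \<Delta> \<Gamma> P enc i t) \<longrightarrow>
         ham S s - \<Gamma> \<ge> \<Delta>" using sim by (elim conjE) assumption
  note fS = configs_finite_ne[OF sS] and fT = configs_finite_ne[OF sT]
  have "Min (ham T ` configs T) \<in> ham T ` configs T" using fT by (intro Min_in) auto
  then obtain t0 where t0: "t0 \<in> configs T" "ham T t0 = Min (ham T ` configs T)" by auto
  have "card (sim_set S T \<Delta> \<Gamma> P enc 1 t0) = d" using c4 t0 assms(2) m1 by auto
  with d1 have "sim_set S T \<Delta> \<Gamma> P enc 1 t0 \<noteq> {}" by auto
  then obtain s0 where s0: "s0 \<in> sim_set S T \<Delta> \<Gamma> P enc 1 t0" by auto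
  have hs0: "ham S s0 - \<Gamma> = ham T t0" using c5 t0 s0 m1 by blast
  have s0c: "s0 \<in> configs S" using s0 by (simp add: sim_set_def)
  have sc: "s \<in> configs S" and hs: "ham S s = Min (ham S ` configs S)"
    using assms(3) by (auto simp: ground_state_def)
  have "ham S s \<le> ham S s0" using hs s0c fS by simp
  hence lt: "ham S s - \<Gamma> < \<Delta>" using hs0 t0 assms(2) by linarith
  have "\<exists>t\<in>configs T. \<exists>i\<in>{1..m}. s \<in> sim_set S T \<Delta> \<Gamma> P enc i t"
  proof (rule ccontr)
    assume "\<not> ?thesis"
    hence "ham S s - \<Gamma> \<ge> \<Delta>" using c6 sc by blast
    thus False using lt by linarith
  qed
  then obtain t i where t: "t \<in> configs T" and i: "i \<in> {1..m}"
    and si: "s \<in> sim_set S T \<Delta> \<Gamma> P enc i t" by blast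
  have ht: "ham S s - \<Gamma> = ham T t" using c5 t i si by blast
  have mp: "\<forall>v\<in>sV T. map s (P v) = enc i (t v)" using si by (simp add: sim_set_def)
  have tv: "\<forall>v\<in>sV T. t v \<in> spins (sq T)" using t by (auto simp: configs_def)
  have "restrict (\<lambda>v. dec (map s (P v))) (sV T) = t"
  proof
    fix v show "restrict (\<lambda>v. dec (map s (P v))) (sV T) v = t v"
    proof (cases "v \<in> sV T")
      case True thus ?thesis using mp tv dec i by auto
    next
      case False thus ?thesis using t by (auto simp: configs_def PiE_def extensional_def)
    qed
  qed
  moreover have "ham T t = Min (ham T ` configs T)"
  proof (rule antisym)
    have "ham S s \<le> ham S s0" using hs s0c fS by simp
    thus "ham T t \<le> Min (ham T ` configs T)" using ht hs0 t0 by linarith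
    show "Min (ham T ` configs T) \<le> ham T t" using t fT by simp
  qed
  ultimately show ?thesis using t by (simp add: ground_state_def)
qed

end
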